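(* Let $p$ be an imitation kernel on a finite set $G$ with $G$-stochastic function $P_{(\cdot)}$, and let $R\subset G$ be the union of all closed intercommunicating classes of $P_{(\cdot)}$. Let $p_R$ be the restriction of $p$ to $R$, i.e. the kernel on $R$ given by $p_R(g\mid\mathbf w)=\sum_{k\in\mathcal A}\theta_kP_{(k)}(w_{-k},g)$ for $g\in R$, $\mathbf w\in R^{-\mathbb N_+}$. Then $\mathcal G(p)=\mathcal G(p_R)$, where laws on $R^{\mathbb Z}$ are identified with laws on $G^{\mathbb Z}$ supported by $R^{\mathbb Z}$. In particular every $\mu\in\mathcal G(p)$ satisfies $\mu(R^{\mathbb Z})=1$.
   Context: $G$ finite. An imitation kernel is $p(g\mid\mathbf w)=\sum_{k\in\mathcal A}\theta_kP_{(k)}(w_{-k},g)$, $\mathbf w=(w_{-1},w_{-2},\dots)\in G^{-\mathbb N_+}$, with $\mathcal A\subset\mathbb N_+$, $\theta$ a probability on $\mathcal A$ with $\theta_k>0$ for $k\in\mathcal A$, and stochastic matrices $P_{(k)}$ on $G$; the $G$-stochastic function is $k\mapsto P_{(k)}$. A law of $\mathbf X=(X_n)_{n\in\mathbb Z}$ is compatible with $p$ if $P(X_n=g\mid X_{n-1},X_{n-2},\dots)=p(g\mid X_{n-1},X_{n-2},\dots)$ a.s. for all $n,g$; $\mathcal G(p)$ is the set of compatible laws. Words: $\mathcal A^*=\bigcup_{n\ge1}\mathcal A^n$, $P_{\mathbf a}=P_{(a_n)}\cdots P_{(a_1)}$. $i$ communicates with $j\ne i$ if $P_{\mathbf a}(i,j)>0$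 for some word; intercommunication (including each state with itself) partitions $G$ into classes; a class $C$ is closed if $i\in C$ communicating with $j$ implies $j\in C$ (rows of $P_{(k)}$ indexed by $R$ are then supported in $R$, so $p_R$ is a kernel on $R$). *)

theory Defs
  imports "HOL-Probability.Probability"
begin

text \<open>States: a finite type 'g. A matrix on G is a function 'g => 'g => real.
 Pasts w in G^{-N_+} are encoded as w :: nat => 'g with w k = w_{-k} (k >= 1; w 0 unused).\<close>

definition mmul :: "('g::finite \<Rightarrow> 'g \<Rightarrow> real) \<Rightarrow> ('g \<Rightarrow> 'g \<Rightarrow> real) \<Rightarrow> 'g \<Rightarrow> 'g \<Rightarrow> real" where
  "mmul X Y i j = (\<Sum>s\<in>UNIV. X i s * Y s j)"

text \<open>P_a = P_(a_n) ... P_(a_1) for the word a = [a_1, ..., a_n].\<close>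
fun wprod :: "(nat \<Rightarrow> 'g::finite \<Rightarrow> 'g \<Rightarrow> real) \<Rightarrow> nat list \<Rightarrow> 'g \<Rightarrow> 'g \<Rightarrow> real" where
  "wprod P [] = (\<lambda>i j. if i = j then 1 else 0)"
| "wprod P (a # as) = mmul (wprod P as) (P a)"

definition stochastic :: "('g::finite \<Rightarrow> 'g \<Rightarrow> real) \<Rightarrow> bool" where
  "stochastic Q \<longleftrightarrow> (\<forall>i j. 0 \<le> Q i j) \<and> (\<forall>i. (\<Sum>j\<in>UNIV. Q i j) = 1)"

text \<open>i communicates with j (reflexive convention: each state communicates with itself).\<close>
definition communicates :: "nat set \<Rightarrow> (nat \<Rightarrow> 'g::finite \<Rightarrow> 'g \<Rightarrow> real) \<Rightarrow> 'g \<Rightarrow> 'g \<Rightarrow> bool" where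
  "communicates A P i j \<longleftrightarrow> i = j \<or> (\<exists>as. as \<noteq> [] \<and> set as \<subseteq> A \<and> wprod P as i j > 0)"

definition intercomm :: "nat set \<Rightarrow> (nat \<Rightarrow> 'g::finite \<Rightarrow> 'g \<Rightarrow> real) \<Rightarrow> 'g \<Rightarrow> 'g \<Rightarrow> bool" where
  "intercomm A P i j \<longleftrightarrow> communicates A P i j \<and> communicates A P j i"

definition comm_classes :: "nat set \<Rightarrow> (nat \<Rightarrow> 'g::finite \<Rightarrow> 'g \<Rightarrow> real) \<Rightarrow> 'g set set" where
  "comm_classes A P = range (\<lambda>i. {j. intercomm A P i j})"

definition closed_class :: "nat set \<Rightarrow> (nat \<Rightarrow> 'g::finite \<Rightarrow> 'g \<Rightarrow> real) \<Rightarrow> 'g set \<Rightarrow> bool" where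
  "closed_class A P C \<longleftrightarrow> (\<forall>i\<in>C. \<forall>j. communicates A P i j \<longrightarrow> j \<in> C)"

definition recurrent_part :: "nat set \<Rightarrow> (nat \<Rightarrow> 'g::finite \<Rightarrow> 'g \<Rightarrow> real) \<Rightarrow> 'g set" where
  "recurrent_part A P = \<Union>{C \<in> comm_classes A P. closed_class A P C}"

definition ikern :: "nat set \<Rightarrow> (nat \<Rightarrow> real) \<Rightarrow> (nat \<Rightarrow> 'g \<Rightarrow> 'g \<Rightarrow> real) \<Rightarrow> 'g \<Rightarrow> (nat \<Rightarrow> 'g) \<Rightarrow> real" where
  "ikern A \<theta> P g w = (\<Sum>\<^sub>\<infinity>k\<in>A. \<theta> k * P k (w k) g)"

definition path_space :: "(int \<Rightarrow> 'g) measure" where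
  "path_space = PiM UNIV (\<lambda>_. count_space UNIV)"

definition past_alg :: "int \<Rightarrow> (int \<Rightarrow> 'g) measure" where
  "past_alg n = sigma UNIV {{x. x m = g} | m g. m < n}"

definition past_of :: "(int \<Rightarrow> 'g) \<Rightarrow> int \<Rightarrow> nat \<Rightarrow> 'g" where
  "past_of x n = (\<lambda>k. x (n - int k))"

text \<open>Laws on S^Z, identified with laws on G^Z supported by S^Z, compatible with the kernel p
 (viewed as a kernel on S): P(X_n = g | X_{n-1}, X_{n-2}, ...) = p(g | X_{n-1}, ...) a.s.
 for all n and all g in S.\<close>
definition compatible :: "'g set \<Rightarrow> ('g \<Rightarrow> (nat \<Rightarrow> 'g) \<Rightarrow> real) \<Rightarrow> (int \<Rightarrow> 'g) measure \<Rightarrow> bool" where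
  "compatible S p \<mu> \<longleftrightarrow>
     prob_space \<mu> \<and> sets \<mu> = sets path_space \<and>
     measure \<mu> {x. \<forall>n. x n \<in> S} = 1 \<and>
     (\<forall>n. \<forall>g\<in>S. AE x in \<mu>.
        real_cond_exp \<mu> (past_alg n) (indicator {y. y n = g}) x = p g (past_of x n))"

definition Gibbs :: "'g set \<Rightarrow> ('g \<Rightarrow> (nat \<Rightarrow> 'g) \<Rightarrow> real) \<Rightarrow> (int \<Rightarrow> 'g) measure set" where
  "Gibbs S p = {\<mu>. compatible S p \<mu>}"

end

theory Submission
  imports Defs
begin


definition stepR :: "nat set \<Rightarrow> (nat \<Rightarrow> 'g::finite \<Rightarrow> 'g \<Rightarrow> real) \<Rightarrow> ('g \<times> 'g) set" where
  "stepR A P = {(i,j). \<exists>k\<in>A. P k i j > 0}"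

lemma stoch_nonneg: "\<forall>k\<in>A. stochastic (P k) \<Longrightarrow> k \<in> A \<Longrightarrow> 0 \<le> P k i j"
  by (auto simp: stochastic_def)

lemma stoch_le1: assumes "\<forall>k\<in>A. stochastic (P k)" "k \<in> A" shows "P k i j \<le> (1::real)"
proof -
  have "P k i j \<le> (\<Sum>j\<in>UNIV. P k i j)"
    by (rule member_le_sum) (use assms in \<open>auto simp: stochastic_def\<close>)
  also have "\<dots> = 1" using assms by (auto simp: stochastic_def)
  finally show ?thesis .
qed

lemma wprod_nonneg:
  assumes "\<forall>k\<in>A. stochastic (P k)" "set as \<subseteq> A"
  shows "0 \<le> wprod P as i j"
  using assms(2)
proof (induction as arbitrary: j)
  case Nil then show ?case by simp
next
  case (Cons a as)
  then show ?case using stoch_nonneg[OF assms(1)]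
    by (auto simp: mmul_def intro!: sum_nonneg)
qed

lemma wprod_pos_rtrancl:
  assumes "\<forall>k\<in>A. stochastic (P k)" "set as \<subseteq> A" "wprod P as i j > 0"
  shows "(i,j) \<in> (stepR A P)\<^sup>*"
  using assms(2,3)
proof (induction as arbitrary: j)
  case Nil then show ?case by (simp split: if_splits)
next
  case (Cons a as)
  have "0 < (\<Sum>s\<in>UNIV. wprod P as i s * P a s j)" using Cons by (simp add: mmul_def)
  then obtain s where s: "wprod P as i s * P a s j > 0"
    by (metis (no_types, lifting) not_le sum_nonpos)
  have n1: "0 \<le> wprod P as i s" using wprod_nonneg[OF assms(1)] Cons by auto
  have n2: "0 \<le> P a s j" using stoch_nonneg[OF assms(1)] Cons by auto
  have "wprod P as i s > 0" "P a s j > 0" using s n1 n2 by (auto simp: zero_less_mult_iff)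
  then have "(i,s) \<in> (stepR A P)\<^sup>*" "(s,j) \<in> stepR A P" using Cons by (auto simp: stepR_def)
  then show ?case by auto
qed

lemma rtrancl_wprod:
  assumes "\<forall>k\<in>A. stochastic (P k)" "(i,j) \<in> (stepR A P)\<^sup>*"
  shows "\<exists>as. set as \<subseteq> A \<and> wprod P as i j > 0"
  using assms(2)
proof (induction rule: rtrancl_induct)
  case base
  then show ?case by (intro exI[of _ "[]"]) simp
next
  case (step j l)
  then obtain as where as: "set as \<subseteq> A" "wprod P as i j > 0" by blast
  from step obtain k where k: "k \<in> A" "P k j l > 0" by (auto simp: stepR_def)
  have "wprod P as i j * P k j l \<le> (\<Sum>s\<in>UNIV. wprod P as i s * P k s l)"
    by (rule member_le_sum) (use wprod_nonneg[OF assms(1) as(1)] stoch_nonneg[OF assms(1) k(1)] in auto)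
  moreover have "wprod P as i j * P k j l > 0" using as k by simp
  ultimately have "wprod P (k#as) i l > 0" by (simp add: mmul_def)
  then show ?case using as k by (intro exI[of _ "k#as"]) auto
qed

lemma communicates_iff:
  assumes "\<forall>k\<in>A. stochastic (P k)"
  shows "communicates A P i j \<longleftrightarrow> (i,j) \<in> (stepR A P)\<^sup>*"
proof
  assume "communicates A P i j"
  then show "(i,j) \<in> (stepR A P)\<^sup>*"
    unfolding communicates_def using wprod_pos_rtrancl[OF assms] by blast
next
  assume "(i,j) \<in> (stepR A P)\<^sup>*"
  then obtain as where as: "set as \<subseteq> A" "wprod P as i j > 0" using rtrancl_wprod[OF assms] by blast
  show "communicates A P i j"
  proof (cases "i = j")
    case False
    then have "as \<noteq> []" using as by auto
    then show ?thesis using as by (auto simp: communicates_def)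
  qed (simp add: communicates_def)
qed

lemma R_closed:
  assumes "\<forall>k\<in>A. stochastic (P k)" "i \<in> recurrent_part A P" "(i,j) \<in> (stepR A P)\<^sup>*"
  shows "j \<in> recurrent_part A P"
proof -
  from assms(2) obtain C where C: "C \<in> comm_classes A P" "closed_class A P C" "i \<in> C"
    by (auto simp: recurrent_part_def)
  have "communicates A P i j" using assms communicates_iff by blast
  then have "j \<in> C" using C by (auto simp: closed_class_def)
  then show ?thesis using C by (auto simp: recurrent_part_def)
qed

lemma reach_R:
  assumes "\<forall>k\<in>A. stochastic (P k)"
  shows "\<exists>j \<in> recurrent_part A P. (i,j) \<in> (stepR A P)\<^sup>*"
proof (induction "card ((stepR A P)\<^sup>* `` {i})" arbitrary: i rule: less_induct)
  case less
  let ?E = "(stepR A P)\<^sup>*"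
  show ?case
  proof (cases "\<forall>l. (i,l) \<in> ?E \<longrightarrow> (l,i) \<in> ?E")
    case True
    define C where "C = {j. intercomm A P i j}"
    have Cc: "C \<in> comm_classes A P" unfolding C_def comm_classes_def by auto
    have iC: "i \<in> C" by (simp add: C_def intercomm_def communicates_def)
    have "closed_class A P C"
      unfolding closed_class_def C_def intercomm_def communicates_iff[OF assms]
    proof (intro ballI allI impI)
      fix m l assume m: "m \<in> {j. (i, j) \<in> ?E \<and> (j, i) \<in> ?E}" and ml: "(m,l) \<in> ?E"
      then have "(i,l) \<in> ?E" by auto
      then show "l \<in> {j. (i, j) \<in> ?E \<and> (j, i) \<in> ?E}" using True by auto
    qed
    then have "i \<in> recurrent_part A P" using Cc iC by (auto simp: recurrent_part_def)
    then show ?thesis by auto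
  next
    case False
    then obtain l where l: "(i,l) \<in> ?E" "(l,i) \<notin> ?E" by auto
    have "?E `` {l} \<subset> ?E `` {i}" using l by (auto intro: rtrancl_trans)
    then have "card (?E `` {l}) < card (?E `` {i})" by (rule psubset_card_mono[OF finite])
    then obtain j where "j \<in> recurrent_part A P" "(l,j) \<in> ?E" using less by blast
    then show ?thesis using l by (auto intro: rtrancl_trans)
  qed
qed



definition tt :: "nat set \<Rightarrow> (nat \<Rightarrow> real) \<Rightarrow> (nat \<Rightarrow> 'g::finite \<Rightarrow> 'g \<Rightarrow> real) \<Rightarrow> nat \<Rightarrow> 'g \<Rightarrow> 'g \<Rightarrow> real" where
  "tt A \<theta> P k i j = (if k \<in> A then \<theta> k * P k i j else 0)"

definition QQ :: "nat set \<Rightarrow> (nat \<Rightarrow> real) \<Rightarrow> (nat \<Rightarrow> 'g::finite \<Rightarrow> 'g \<Rightarrow> real) \<Rightarrow> 'g \<Rightarrow> 'g \<Rightarrow> real" where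
  "QQ A \<theta> P i j = (\<Sum>k. tt A \<theta> P k i j)"

locale ikset =
  fixes A :: "nat set" and \<theta> :: "nat \<Rightarrow> real" and P :: "nat \<Rightarrow> 'g::finite \<Rightarrow> 'g \<Rightarrow> real"
  assumes pos: "\<forall>k\<in>A. \<theta> k > 0"
    and hs: "(\<theta> has_sum 1) A"
    and st: "\<forall>k\<in>A. stochastic (P k)"
begin

definition cc :: "nat \<Rightarrow> real" where "cc k = (if k \<in> A then \<theta> k else 0)"

lemma cc_sums: "cc sums 1"
proof -
  have "(cc has_sum 1) UNIV"
    using hs unfolding cc_def by (subst has_sum_cong_neutral[where T=A]) auto
  then show ?thesis by (rule has_sum_imp_sums)
qed

lemma cc_nonneg: "0 \<le> cc k" using pos by (auto simp: cc_def less_imp_le)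

lemma tt_nonneg: "0 \<le> tt A \<theta> P k i j"
  using pos stoch_nonneg[OF st] by (auto simp: tt_def less_imp_le)

lemma tt_le: "tt A \<theta> P k i j \<le> cc k"
  using pos stoch_le1[OF st] by (auto simp: tt_def cc_def intro!: mult_left_le)

lemma tt_summable: "summable (\<lambda>k. tt A \<theta> P k i j)"
  by (rule summable_comparison_test[OF _ sums_summable[OF cc_sums]])
     (use tt_nonneg tt_le in auto)

lemma tt_summable_gen: "summable (\<lambda>k. tt A \<theta> P k (f k) j)"
  by (rule summable_comparison_test[OF _ sums_summable[OF cc_sums]])
     (use tt_nonneg tt_le in auto)

lemma ikern_eq: "ikern A \<theta> P g w = (\<Sum>k. tt A \<theta> P k (w k) g)"
proof -
  have "ikern A \<theta> P g w = infsum (\<lambda>k. tt A \<theta> P k (w k) g) UNIV"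
    unfolding ikern_def by (rule infsum_cong_neutral) (auto simp: tt_def)
  also have "\<dots> = (\<Sum>k. tt A \<theta> P k (w k) g)"
    by (rule infsumI, rule sums_nonneg_imp_has_sum)
       (auto intro: summable_sums[OF tt_summable_gen] tt_nonneg)
  finally show ?thesis .
qed

lemma QQ_nonneg: "0 \<le> QQ A \<theta> P i j"
  unfolding QQ_def by (rule suminf_nonneg[OF tt_summable tt_nonneg])

lemma QQ_pos: "(i,j) \<in> stepR A P \<Longrightarrow> QQ A \<theta> P i j > 0"
proof -
  assume "(i,j) \<in> stepR A P"
  then obtain k where k: "k \<in> A" "P k i j > 0" by (auto simp: stepR_def)
  have "tt A \<theta> P k i j > 0" using k pos by (simp add: tt_def)
  then show ?thesis unfolding QQ_def by (rule suminf_pos2[OF tt_summable tt_nonneg])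
qed

lemma QQ_rowsum: "(\<Sum>j\<in>UNIV. QQ A \<theta> P i j) = 1"
proof -
  have "(\<Sum>j\<in>UNIV. QQ A \<theta> P i j) = (\<Sum>k. \<Sum>j\<in>UNIV. tt A \<theta> P k i j)"
    unfolding QQ_def by (rule suminf_sum[symmetric]) (rule tt_summable)
  also have "(\<lambda>k. \<Sum>j\<in>UNIV. tt A \<theta> P k i j) = cc"
    using st by (auto simp: tt_def cc_def stochastic_def simp flip: sum_distrib_left)
  finally show ?thesis using cc_sums sums_unique by metis
qed

lemma P_zero_out: "i \<in> recurrent_part A P \<Longrightarrow> j \<notin> recurrent_part A P \<Longrightarrow> k \<in> A \<Longrightarrow> P k i j = 0"
proof (rule ccontr)
  assume a: "i \<in> recurrent_part A P" "j \<notin> recurrent_part A P" "k \<in> A" "P k i j \<noteq> 0"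
  then have "P k i j > 0" using stoch_nonneg[OF st] by (metis less_eq_real_def)
  then have "(i,j) \<in> (stepR A P)\<^sup>*" using a by (auto simp: stepR_def)
  then show False using R_closed[OF st] a by blast
qed

lemma tt_zero_out: "i \<in> recurrent_part A P \<Longrightarrow> j \<notin> recurrent_part A P \<Longrightarrow> tt A \<theta> P k i j = 0"
  using P_zero_out by (auto simp: tt_def)

lemma QQ_zero_out: "i \<in> recurrent_part A P \<Longrightarrow> j \<notin> recurrent_part A P \<Longrightarrow> QQ A \<theta> P i j = 0"
  using tt_zero_out by (simp add: QQ_def)

lemma linalg:
  fixes b :: "'g \<Rightarrow> real"
  defines "T \<equiv> - recurrent_part A P"
  assumes bnn: "\<And>i. 0 \<le> b i"
    and ineq: "\<And>g. g \<in> T \<Longrightarrow> b g \<le> (\<Sum>i\<in>T. b i * QQ A \<theta> P i g)"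
  shows "\<And>i. i \<in> T \<Longrightarrow> b i = 0"
proof -
  let ?Q = "QQ A \<theta> P"
  define rT where "rT i = (\<Sum>g\<in>T. ?Q i g)" for i
  have rT1: "rT i \<le> 1" for i
  proof -
    have "rT i \<le> (\<Sum>g\<in>UNIV. ?Q i g)" unfolding rT_def
      by (rule sum_mono2) (auto simp: QQ_nonneg)
    then show ?thesis using QQ_rowsum by simp
  qed
  define X where "X = (\<Sum>g\<in>T. b g)"
  define Y where "Y = (\<Sum>g\<in>T. \<Sum>i\<in>T. b i * ?Q i g)"
  have XY: "X \<le> Y" unfolding X_def Y_def by (rule sum_mono) (rule ineq)
  have Y2: "Y = (\<Sum>i\<in>T. b i * rT i)"
    unfolding Y_def rT_def by (subst sum.swap) (simp add: sum_distrib_left)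
  have YX: "Y \<le> X" unfolding Y2 X_def
    by (rule sum_mono) (use bnn rT1 in \<open>auto intro: mult_left_le\<close>)
  have D: "b g = (\<Sum>i\<in>T. b i * ?Q i g)" if "g \<in> T" for g
  proof -
    have "(\<Sum>g\<in>T. (\<Sum>i\<in>T. b i * ?Q i g) - b g) = Y - X"
      unfolding X_def Y_def by (simp add: sum_subtractf)
    also have "\<dots> = 0" using XY YX by simp
    finally have "\<forall>g\<in>T. (\<Sum>i\<in>T. b i * ?Q i g) - b g = 0"
      by (subst (asm) sum_nonneg_eq_0_iff) (use ineq in auto)
    then show ?thesis using that by auto
  qed
  have E: "rT i = 1" if "i \<in> T" "b i > 0" for i
  proof -
    have "(\<Sum>i\<in>T. b i * (1 - rT i)) = X - Y"
      unfolding X_def Y2 by (simp add: algebra_simps sum_subtractf)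
    also have "\<dots> = 0" using XY YX by simp
    finally have "\<forall>i\<in>T. b i * (1 - rT i) = 0"
      by (subst (asm) sum_nonneg_eq_0_iff) (use bnn rT1 in auto)
    then show ?thesis using that by auto
  qed
  have F: "?Q i g = 0" if "i \<in> T" "b i > 0" "g \<notin> T" for i g
  proof -
    have "(\<Sum>g\<in>UNIV. ?Q i g) = rT i + (\<Sum>g\<in>-T. ?Q i g)"
      unfolding rT_def using sum.subset_diff[of T UNIV "?Q i"] by (simp add: Compl_eq_Diff_UNIV add.commute)
    then have "(\<Sum>g\<in>-T. ?Q i g) = 0" using E[OF that(1,2)] QQ_rowsum by simp
    then show ?thesis using that(3) by (subst (asm) sum_nonneg_eq_0_iff) (auto simp: QQ_nonneg)
  qed
  define S where "S = {i\<in>T. b i > 0}"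
  have Sstep: "j \<in> S" if "i \<in> S" "(i,j) \<in> stepR A P" for i j
  proof -
    have q: "?Q i j > 0" using QQ_pos that(2) by blast
    then have jT: "j \<in> T" using F that(1) unfolding S_def by force
    have "b i * ?Q i j \<le> (\<Sum>l\<in>T. b l * ?Q l j)"
      by (rule member_le_sum) (use that(1) bnn QQ_nonneg in \<open>auto simp: S_def\<close>)
    moreover have "b i * ?Q i j > 0" using q that(1) by (simp add: S_def)
    ultimately show ?thesis using D[OF jT] jT by (simp add: S_def)
  qed
  have Sreach: "j \<in> S" if "(i,j) \<in> (stepR A P)\<^sup>*" "i \<in> S" for i j
    using that by (induction rule: rtrancl_induct) (auto intro: Sstep)
  fix i assume iT: "i \<in> T"
  show "b i = 0"
  proof (rule ccontr)
    assume "b i \<noteq> 0"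
    then have "i \<in> S" using bnn iT unfolding S_def by (simp add: less_le)
    obtain j where j: "j \<in> recurrent_part A P" "(i,j) \<in> (stepR A P)\<^sup>*" using reach_R[OF st] by blast
    have "j \<in> S" using Sreach[OF j(2) \<open>i \<in> S\<close>] .
    then show False using j(1) by (simp add: S_def T_def)
  qed
qed

end


lemma space_path[simp]: "space (path_space :: (int \<Rightarrow> 'g) measure) = UNIV"
  by (simp add: path_space_def space_PiM)

lemma comp_meas: "(\<lambda>x::int\<Rightarrow>'g. x m) \<in> measurable path_space (count_space UNIV)"
  unfolding path_space_def by (rule measurable_component_singleton) simp

lemma cyl_sets: "{x::int\<Rightarrow>'g. x m = g} \<in> sets path_space"
proof -
  have "(\<lambda>x::int\<Rightarrow>'g. x m) -` {g} \<inter> space path_space \<in> sets path_space"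
    by (rule measurable_sets[OF comp_meas]) simp
  then show ?thesis by (simp add: vimage_def)
qed

lemma fcomp_meas: "(\<lambda>x::int\<Rightarrow>'g. f (x m)) \<in> borel_measurable path_space"
  by (rule measurable_compose[OF comp_meas]) simp

lemma subalg_past:
  assumes "sets \<mu> = sets (path_space :: (int \<Rightarrow> 'g) measure)"
  shows "subalgebra \<mu> (past_alg n :: (int \<Rightarrow> 'g) measure)"
proof -
  have sp: "space \<mu> = UNIV" using sets_eq_imp_space_eq[OF assms] by simp
  have G: "{{x::int\<Rightarrow>'g. x m = g} | m g. m < n} \<subseteq> sets path_space" using cyl_sets by auto
  have "sigma_sets UNIV {{x::int\<Rightarrow>'g. x m = g} | m g. m < n} \<subseteq> sets path_space"
    by (rule sets.sigma_sets_subset'[OF G]) (metis sets.top space_path)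
  then show ?thesis unfolding subalgebra_def past_alg_def using assms sp
    by (simp add: sets_measure_of)
qed

lemma fms_past:
  assumes "prob_space \<mu>" "sets \<mu> = sets (path_space :: (int \<Rightarrow> 'g) measure)"
  shows "finite_measure_subalgebra \<mu> (past_alg n :: (int \<Rightarrow> 'g) measure)"
  unfolding finite_measure_subalgebra_def finite_measure_subalgebra_axioms_def
  using subalg_past[OF assms(2)] assms(1) prob_space.finite_measure by blast

lemma ce_nn:
  fixes q :: "(int \<Rightarrow> 'g) \<Rightarrow> real"
  assumes "prob_space \<mu>" "sets \<mu> = sets (path_space :: (int \<Rightarrow> 'g) measure)"
    and ae: "AE x in \<mu>. real_cond_exp \<mu> (past_alg n) (indicator {y. y n = g}) x = q x"
  shows "ennreal (measure \<mu> {x. x n = g}) = (\<integral>\<^sup>+ x. ennreal (q x) \<partial>\<mu>)"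
proof -
  interpret finite_measure_subalgebra \<mu> "past_alg n" by (rule fms_past[OF assms(1,2)])
  interpret prob_space \<mu> by (rule assms(1))
  have E: "{y::int\<Rightarrow>'g. y n = g} \<in> sets \<mu>" using cyl_sets[of n g] assms(2) by simp
  have sp: "space \<mu> = UNIV" using sets_eq_imp_space_eq[OF assms(2)] by simp
  have int: "integrable \<mu> (indicator {y::int\<Rightarrow>'g. y n = g} :: _ \<Rightarrow> real)"
    by (rule integrable_real_indicator[OF E]) (simp add: emeasure_eq_measure)
  have nn: "AE x in \<mu>. 0 \<le> real_cond_exp \<mu> (past_alg n) (indicator {y. y n = g}) x"
    by (rule real_cond_exp_pos[OF AE_I2 borel_measurable_indicator[OF E]]) simp
  have "(\<integral>\<^sup>+ x. ennreal (q x) \<partial>\<mu>) = (\<integral>\<^sup>+ x. ennreal (real_cond_exp \<mu> (past_alg n) (indicator {y. y n = g}) x) \<partial>\<mu>)"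
    by (rule nn_integral_cong_AE) (rule AE_mp[OF ae], rule AE_I2, simp)
  also have "\<dots> = ennreal (\<integral>x. real_cond_exp \<mu> (past_alg n) (indicator {y. y n = g}) x \<partial>\<mu>)"
    by (rule nn_integral_eq_integral[OF real_cond_exp_int(1)[OF int] nn])
  also have "\<dots> = ennreal (\<integral>x. indicator {y::int\<Rightarrow>'g. y n = g} x \<partial>\<mu>)"
    using real_cond_exp_int(2)[OF int] by simp
  also have "\<dots> = ennreal (measure \<mu> {x. x n = g})" by (simp add: sp)
  finally show ?thesis by simp
qed



context ikset
begin

lemma key_ineq:
  assumes ps: "prob_space \<mu>" and se: "sets \<mu> = sets (path_space :: (int \<Rightarrow> 'g) measure)"
    and ae: "AE x in \<mu>. real_cond_exp \<mu> (past_alg n) (indicator {y. y n = g}) x = ikern A \<theta> P g (past_of x n)"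
    and bb: "\<And>m i. measure \<mu> {x. x m = i} \<le> b i"
  shows "measure \<mu> {x::int\<Rightarrow>'g. x n = g} \<le> (\<Sum>i\<in>UNIV. b i * QQ A \<theta> P i g)"
proof -
  have sp: "space \<mu> = UNIV" using sets_eq_imp_space_eq[OF se] by simp
  have bnn: "0 \<le> b i" for i using bb[of 0 i] measure_nonneg[of \<mu>] by (meson order_trans)
  have mc: "measurable \<mu> N = measurable path_space N" for N by (rule measurable_cong_sets[OF se refl])
  have cylm: "{y::int\<Rightarrow>'g. y m = i} \<in> sets \<mu>" for m i using cyl_sets[of m i] se by simp
  define d where "d k = (\<Sum>i\<in>UNIV. tt A \<theta> P k i g * b i)" for k
  have dsum: "summable d" unfolding d_def
    by (rule summable_sum) (rule summable_mult2[OF tt_summable])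
  have dnn: "0 \<le> d k" for k unfolding d_def by (rule sum_nonneg) (simp add: tt_nonneg bnn)
  have term_le: "(\<integral>\<^sup>+ x. ennreal (tt A \<theta> P k (x (n - int k)) g) \<partial>\<mu>) \<le> ennreal (d k)" for k
  proof -
    let ?m = "n - int k"
    have pw: "ennreal (tt A \<theta> P k (x ?m) g) = (\<Sum>i\<in>UNIV. ennreal (tt A \<theta> P k i g) * indicator {y. y ?m = i} x)" for x
    proof -
      have "\<And>i. ennreal (tt A \<theta> P k i g) * indicator {y. y ?m = i} x = (if x ?m = i then ennreal (tt A \<theta> P k i g) else 0)"
        by (simp add: indicator_def)
      then show ?thesis by (simp add: sum.delta)
    qed
    have "(\<integral>\<^sup>+ x. ennreal (tt A \<theta> P k (x ?m) g) \<partial>\<mu>) = (\<integral>\<^sup>+ x. (\<Sum>i\<in>UNIV. ennreal (tt A \<theta> P k i g) * indicator {y. y ?m = i} x) \<partial>\<mu>)"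
      by (simp only: pw)
    also have "\<dots> = (\<Sum>i\<in>UNIV. \<integral>\<^sup>+ x. ennreal (tt A \<theta> P k i g) * indicator {y. y ?m = i} x \<partial>\<mu>)"
      by (rule nn_integral_sum) (use cylm in simp)
    also have "\<dots> = (\<Sum>i\<in>UNIV. ennreal (tt A \<theta> P k i g) * emeasure \<mu> {y. y ?m = i})"
      by (rule sum.cong[OF refl], rule nn_integral_cmult_indicator[OF cylm])
    also have "\<dots> \<le> (\<Sum>i\<in>UNIV. ennreal (tt A \<theta> P k i g) * ennreal (b i))"
    proof (rule sum_mono, rule mult_left_mono)
      fix i
      interpret prob_space \<mu> by (rule ps)
      show "emeasure \<mu> {y. y ?m = i} \<le> ennreal (b i)"
        using bb[of ?m i] by (simp add: emeasure_eq_measure ennreal_leI)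
    qed simp
    also have "\<dots> = ennreal (d k)" unfolding d_def
      by (simp add: ennreal_mult'' tt_nonneg bnn sum_nonneg flip: sum_ennreal)
    finally show ?thesis .
  qed
  have "ennreal (measure \<mu> {x. x n = g}) = (\<integral>\<^sup>+ x. ennreal (ikern A \<theta> P g (past_of x n)) \<partial>\<mu>)"
    by (rule ce_nn[OF ps se ae])
  also have "\<dots> = (\<integral>\<^sup>+ x. (\<Sum>k. ennreal (tt A \<theta> P k (x (n - int k)) g)) \<partial>\<mu>)"
    by (rule nn_integral_cong)
       (simp add: ikern_eq past_of_def suminf_ennreal2 tt_nonneg tt_summable_gen)
  also have "\<dots> = (\<Sum>k. \<integral>\<^sup>+ x. ennreal (tt A \<theta> P k (x (n - int k)) g) \<partial>\<mu>)"
    by (rule nn_integral_suminf) (simp only: mc, rule fcomp_meas)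
  also have "\<dots> \<le> (\<Sum>k. ennreal (d k))"
    by (rule suminf_le[OF term_le summableI summableI])
  also have "\<dots> = ennreal (\<Sum>k. d k)" by (rule suminf_ennreal2[OF dnn dsum])
  finally have le: "measure \<mu> {x. x n = g} \<le> (\<Sum>k. d k)"
    by (simp add: ennreal_le_iff suminf_nonneg[OF dsum dnn])
  have "(\<Sum>k. d k) = (\<Sum>i\<in>UNIV. \<Sum>k. tt A \<theta> P k i g * b i)" unfolding d_def
    by (rule suminf_sum) (rule summable_mult2[OF tt_summable])
  also have "\<dots> = (\<Sum>i\<in>UNIV. b i * QQ A \<theta> P i g)"
    unfolding QQ_def by (rule sum.cong[OF refl]) (simp add: suminf_mult[OF tt_summable, symmetric] mult.commute)
  finally show ?thesis using le by simp
qed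

end


lemma R_set_sets: "{x::int\<Rightarrow>'g::finite. \<forall>n. x n \<in> R} \<in> sets path_space"
proof -
  have eq: "{x::int\<Rightarrow>'g. \<forall>n. x n \<in> R} = (\<Inter>n. \<Union>i\<in>R. {x. x n = i})" by auto
  show ?thesis unfolding eq
    by (intro sets.countable_INT' sets.finite_UN) (auto simp: cyl_sets)
qed

context ikset
begin

lemma support:
  assumes ps: "prob_space \<mu>" and se: "sets \<mu> = sets (path_space :: (int \<Rightarrow> 'g) measure)"
    and ae: "\<And>n g. AE x in \<mu>. real_cond_exp \<mu> (past_alg n) (indicator {y. y n = g}) x = ikern A \<theta> P g (past_of x n)"
  shows "measure \<mu> {x. \<forall>n. x n \<in> recurrent_part A P} = 1"
proof -
  interpret prob_space \<mu> by (rule ps)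
  let ?R = "recurrent_part A P"
  define T where "T = - ?R"
  define b where "b i = (SUP m. measure \<mu> {x::int\<Rightarrow>'g. x m = i})" for i
  have bdd: "bdd_above (range (\<lambda>m. measure \<mu> {x::int\<Rightarrow>'g. x m = i}))" for i
    by (rule bdd_aboveI[of _ 1]) auto
  have bb: "measure \<mu> {x. x m = i} \<le> b i" for m i
    unfolding b_def by (rule cSUP_upper[OF UNIV_I bdd])
  have bnn: "0 \<le> b i" for i using bb[of 0 i] measure_nonneg[of \<mu>] by (meson order_trans)
  have ineq: "b g \<le> (\<Sum>i\<in>T. b i * QQ A \<theta> P i g)" if gT: "g \<in> T" for g
  proof -
    have "(\<Sum>i\<in>UNIV. b i * QQ A \<theta> P i g) = (\<Sum>i\<in>T. b i * QQ A \<theta> P i g)"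
      by (rule sum.mono_neutral_right) (use gT in \<open>auto simp: T_def QQ_zero_out\<close>)
    then have "measure \<mu> {x. x m = g} \<le> (\<Sum>i\<in>T. b i * QQ A \<theta> P i g)" for m
      using key_ineq[OF ps se ae bb, of m g] by simp
    then show ?thesis unfolding b_def[of g] by (intro cSUP_least) auto
  qed
  have b0: "b i = 0" if "i \<in> T" for i
    using linalg[of b] bnn ineq that unfolding T_def by blast
  have cylm: "{y::int\<Rightarrow>'g. y m = i} \<in> sets \<mu>" for m i using cyl_sets[of m i] se by simp
  have null: "AE x in \<mu>. x m \<noteq> i" if "i \<in> T" for m i
  proof -
    have "measure \<mu> {y. y m = i} = 0" using bb[of m i] b0[OF that] measure_nonneg[of \<mu> "{y. y m = i}"] by linarith
    then have "{y. y m = i} \<in> null_sets \<mu>" using cylm by (simp add: emeasure_eq_measure null_sets_def)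
    then show ?thesis by (rule AE_not_in[THEN AE_mp]) (auto)
  qed
  have "AE x in \<mu>. \<forall>m. \<forall>i\<in>T. x m \<noteq> i"
    using null by (simp add: AE_all_countable AE_finite_all) 
  then have "AE x in \<mu>. x \<in> {x. \<forall>n. x n \<in> ?R}"
    by (rule AE_mp) (auto simp: T_def)
  moreover have "{x. \<forall>n. x n \<in> ?R} \<in> sets \<mu>" using R_set_sets se by simp
  ultimately have "emeasure \<mu> {x. \<forall>n. x n \<in> ?R} = 1" using emeasure_eq_1_AE by blast
  then show ?thesis by (simp add: emeasure_eq_measure)
qed

lemma outside:
  assumes ps: "prob_space \<mu>" and se: "sets \<mu> = sets (path_space :: (int \<Rightarrow> 'g) measure)"
    and m1: "measure \<mu> {x. \<forall>n. x n \<in> recurrent_part A P} = 1"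
    and g: "g \<notin> recurrent_part A P"
  shows "AE x in \<mu>. real_cond_exp \<mu> (past_alg n) (indicator {y. y n = g}) x = ikern A \<theta> P g (past_of x n)"
proof -
  interpret prob_space \<mu> by (rule ps)
  interpret finite_measure_subalgebra \<mu> "past_alg n" by (rule fms_past[OF ps se])
  let ?R = "recurrent_part A P"
  have sp: "space \<mu> = UNIV" using sets_eq_imp_space_eq[OF se] by simp
  have cylm: "{y::int\<Rightarrow>'g. y m = i} \<in> sets \<mu>" for m i using cyl_sets[of m i] se by simp
  have Rs: "{x. \<forall>n. x n \<in> ?R} \<in> sets \<mu>" using R_set_sets se by simp
  have aeR: "AE x in \<mu>. \<forall>n. x n \<in> ?R"
    by (rule AE_I_eq_1) (use m1 Rs sp in \<open>simp_all add: emeasure_eq_measure\<close>)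
  have a1: "AE x in \<mu>. (indicator {y. y n = g} x :: real) = 0"
    by (rule AE_mp[OF aeR], rule AE_I2) (use g in \<open>auto simp: indicator_def\<close>)
  have a2: "AE x in \<mu>. real_cond_exp \<mu> (past_alg n) (indicator {y. y n = g}) x = real_cond_exp \<mu> (past_alg n) (\<lambda>_. 0) x"
    by (rule real_cond_exp_cong[OF a1]) (use cylm in auto)
  have a3: "AE x in \<mu>. real_cond_exp \<mu> (past_alg n) (\<lambda>_. 0) x = 0"
    by (rule real_cond_exp_F_meas) auto
  have a4: "AE x in \<mu>. ikern A \<theta> P g (past_of x n) = 0"
  proof (rule AE_mp[OF aeR], rule AE_I2, intro impI)
    fix x :: "int \<Rightarrow> 'g" assume "\<forall>n. x n \<in> ?R"
    then have "\<And>k. tt A \<theta> P k (x (n - int k)) g = 0" using tt_zero_out g by blast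
    then show "ikern A \<theta> P g (past_of x n) = 0" by (simp add: ikern_eq past_of_def)
  qed
  show ?thesis using a2 a3 a4 by eventually_elim simp
qed

end

theorem mainTheorem3:
  fixes A :: "nat set" and \<theta> :: "nat \<Rightarrow> real" and P :: "nat \<Rightarrow> 'g::finite \<Rightarrow> 'g \<Rightarrow> real"
  assumes "A \<subseteq> {1..}"
    and "\<forall>k\<in>A. \<theta> k > 0"
    and "(\<theta> has_sum 1) A"
    and "\<forall>k\<in>A. stochastic (P k)"
  shows "Gibbs UNIV (ikern A \<theta> P) = Gibbs (recurrent_part A P) (ikern A \<theta> P)
    \<and> (\<forall>\<mu>\<in>Gibbs UNIV (ikern A \<theta> P). measure \<mu> {x. \<forall>n. x n \<in> recurrent_part A P} = 1)"
proof -
  interpret ikset A \<theta> P using assms(2-4) by unfold_locales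
  let ?R = "recurrent_part A P"
  have s1: "measure \<mu> {x. \<forall>n. x n \<in> ?R} = 1" if "\<mu> \<in> Gibbs UNIV (ikern A \<theta> P)" for \<mu>
    using that unfolding Gibbs_def compatible_def by (intro support) auto
  have sub1: "\<mu> \<in> Gibbs ?R (ikern A \<theta> P)" if "\<mu> \<in> Gibbs UNIV (ikern A \<theta> P)" for \<mu>
    using that s1[OF that] unfolding Gibbs_def compatible_def by auto
  have sub2: "\<mu> \<in> Gibbs UNIV (ikern A \<theta> P)" if m: "\<mu> \<in> Gibbs ?R (ikern A \<theta> P)" for \<mu>
  proof -
    have c: "prob_space \<mu>" "sets \<mu> = sets (path_space :: (int \<Rightarrow> 'g) measure)"
      "measure \<mu> {x. \<forall>n. x n \<in> ?R} = 1"
      "\<And>n g. g \<in> ?R \<Longrightarrow> AE x in \<mu>. real_cond_exp \<mu> (past_alg n) (indicator {y. y n = g}) x = ikern A \<theta> P g (past_of x n)"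
      using m unfolding Gibbs_def compatible_def by auto
    have sp: "space \<mu> = UNIV" using sets_eq_imp_space_eq[OF c(2)] by simp
    have u: "measure \<mu> {x::int\<Rightarrow>'g. \<forall>n. x n \<in> UNIV} = 1"
      using prob_space.prob_space[OF c(1)] sp by simp
    have "AE x in \<mu>. real_cond_exp \<mu> (past_alg n) (indicator {y. y n = g}) x = ikern A \<theta> P g (past_of x n)" for n g
    proof (cases "g \<in> ?R")
      case True then show ?thesis using c(4) by blast
    next
      case False then show ?thesis using outside[OF c(1,2,3)] by blast
    qed
    then show ?thesis using c(1,2) u unfolding Gibbs_def compatible_def by auto
  qed
  show ?thesis using sub1 sub2 s1 by blast
qed

end
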